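(* Let $w\ge 2$ and let $(C_1,C_2)$ be an equitable $2$-partition of $J(n,w)$ whose quotient matrix $\begin{pmatrix} a & b\\ c& d\end{pmatrix}$ has $\lambda_2(n,w)=(w-2)(n-w-2)-2$ as an eigenvalue, with the cells ordered so that $b\ge c$. Then the quotient matrix equals $\begin{pmatrix} w(n-w)-b & b\\ 2n-2-b & w(n-w)-2n+2+b\end{pmatrix}$ for some $b\in\{n-1,n,\dots,2n-1\}$.
   Context: The Johnson graph $J(n,w)$ has as vertices the binary vectors of length $n$ with exactly $w$ ones; two vertices are adjacent iff they have exactly $w-1$ common ones; it is regular of degree $w(n-w)$. A $2$-partition $(C_1,C_2)$ of the vertex set into nonempty cells is equitable with quotient matrix $S=(s_{ij})$ if every vertex of $C_i$ has exactly $s_{ij}$ neighbours in $C_j$. The paper adopts the convention that cells are ordered so that $s_{12}\ge s_{21}$. *)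

theory Defs
  imports "Jordan_Normal_Form.Char_Poly"
begin

text \<open>Vertices of the Johnson graph J(n,w): binary vectors of length n with exactly
  w ones, identified with their supports, i.e. the w-subsets of {0..<n}.\<close>
definition johnson_vertices :: "nat \<Rightarrow> nat \<Rightarrow> nat set set" where
  "johnson_vertices n w = {A. A \<subseteq> {..<n} \<and> card A = w}"

definition johnson_adj :: "nat \<Rightarrow> nat set \<Rightarrow> nat set \<Rightarrow> bool" where
  "johnson_adj w A B = (card (A \<inter> B) = w - 1)"

definition johnson_nbrs_in :: "nat \<Rightarrow> nat set \<Rightarrow> nat set set \<Rightarrow> nat" where
  "johnson_nbrs_in w x C = card {y \<in> C. johnson_adj w x y}"

definition equitable_2partition ::
  "nat \<Rightarrow> nat \<Rightarrow> nat set set \<Rightarrow> nat set set \<Rightarrow> nat \<Rightarrow> nat \<Rightarrow> nat \<Rightarrow> nat \<Rightarrow> bool" where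
  "equitable_2partition n w C1 C2 a b c d \<longleftrightarrow>
     C1 \<noteq> {} \<and> C2 \<noteq> {} \<and> C1 \<inter> C2 = {} \<and> C1 \<union> C2 = johnson_vertices n w \<and>
     (\<forall>x\<in>C1. johnson_nbrs_in w x C1 = a \<and> johnson_nbrs_in w x C2 = b) \<and>
     (\<forall>x\<in>C2. johnson_nbrs_in w x C1 = c \<and> johnson_nbrs_in w x C2 = d)"

definition quotient_mat :: "nat \<Rightarrow> nat \<Rightarrow> nat \<Rightarrow> nat \<Rightarrow> real mat" where
  "quotient_mat a b c d = mat_of_rows_list 2 [[real a, real b], [real c, real d]]"

definition lambda2 :: "nat \<Rightarrow> nat \<Rightarrow> int" where
  "lambda2 n w = (int w - 2) * (int n - int w - 2) - 2"

end

theory Submission imports Defs begin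

lemma nbr_set:
  assumes x: "x \<subseteq> {..<n}" "card x = w" and w: "w \<ge> 1"
  shows "{y \<in> johnson_vertices n w. johnson_adj w x y}
       = (\<lambda>(i,j). insert j (x - {i})) ` (x \<times> ({..<n} - x))"
proof (intro equalityI subsetI)
  fix y assume "y \<in> {y \<in> johnson_vertices n w. johnson_adj w x y}"
  hence y: "y \<subseteq> {..<n}" "card y = w" "card (x \<inter> y) = w - 1"
    by (auto simp: johnson_vertices_def johnson_adj_def)
  have fx: "finite x" "finite y" using x y finite_subset by auto
  have "card (x - y) = 1" using y fx x w by (metis card_Diff_subset_Int Diff_Diff_Int
     card_Diff_subset inf_le1 Int_commute finite_Int diff_diff_cancel)
  then obtain i where i: "x - y = {i}" by (auto simp: card_Suc_eq)
  have "card (y - x) = 1" using y fx x w by (metis card_Diff_subset_Int Int_commute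
     finite_Int diff_diff_cancel)
  then obtain j where j: "y - x = {j}" by (auto simp: card_Suc_eq)
  have "y = insert j (x - {i})" using i j by blast
  moreover have "(i,j) \<in> x \<times> ({..<n} - x)" using i j y by auto
  ultimately show "y \<in> (\<lambda>(i,j). insert j (x - {i})) ` (x \<times> ({..<n} - x))" by force
next
  fix y assume "y \<in> (\<lambda>(i,j). insert j (x - {i})) ` (x \<times> ({..<n} - x))"
  then obtain i j where ij: "i \<in> x" "j \<in> {..<n}" "j \<notin> x" and yd: "y = insert j (x - {i})" by auto
  have fx: "finite x" using x finite_subset by auto
  have "x \<inter> y = x - {i}" using ij yd by auto
  hence "card (x \<inter> y) = w - 1" using ij x fx by simp
  moreover have "card y = w" using yd ij fx x w by (simp add: card_insert_if)
  moreover have "y \<subseteq> {..<n}" using yd ij x by auto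
  ultimately show "y \<in> {y \<in> johnson_vertices n w. johnson_adj w x y}"
    by (simp add: johnson_vertices_def johnson_adj_def)
qed

lemma degree:
  assumes x: "x \<subseteq> {..<n}" "card x = w" and w: "w \<ge> 1"
  shows "card {y \<in> johnson_vertices n w. johnson_adj w x y} = w * (n - w)"
proof -
  have fx: "finite x" using x finite_subset by auto
  have inj: "inj_on (\<lambda>(i,j). insert j (x - {i})) (x \<times> ({..<n} - x))"
  proof (rule inj_onI)
    fix p q assume p: "p \<in> x \<times> ({..<n} - x)" and q: "q \<in> x \<times> ({..<n} - x)"
      and e: "(\<lambda>(i,j). insert j (x - {i})) p = (\<lambda>(i,j). insert j (x - {i})) q"
    obtain i j where pij: "p = (i,j)" by force
    obtain i' j' where qij: "q = (i',j')" by force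
    have h: "i \<in> x" "j \<notin> x" "i' \<in> x" "j' \<notin> x" using p q pij qij by auto
    have e': "insert j (x - {i}) = insert j' (x - {i'})" using e pij qij by simp
    have "j = j'" using e' h by blast
    moreover have "i = i'"
    proof (rule ccontr)
      assume ne: "i \<noteq> i'"
      hence "i' \<in> insert j (x - {i})" using h by blast
      hence "i' \<in> insert j' (x - {i'})" using e' by simp
      thus False using h by auto
    qed
    ultimately show "p = q" using pij qij by simp
  qed
  have "card (x \<times> ({..<n} - x)) = w * (n - w)"
    using x fx by (simp add: card_cartesian_product card_Diff_subset)
  thus ?thesis using card_image[OF inj] nbr_set[OF x w] by simp
qed


lemma eig2:
  assumes "eigenvalue (quotient_mat a b c d) l"
  shows "\<exists>v0 v1. (v0 \<noteq> 0 \<or> v1 \<noteq> 0) \<and> real a * v0 + real b * v1 = l * v0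
          \<and> real c * v0 + real d * v1 = l * v1"
proof -
  obtain v where v: "v \<in> carrier_vec 2" "v \<noteq> 0\<^sub>v 2" "quotient_mat a b c d *\<^sub>v v = l \<cdot>\<^sub>v v"
  proof -
    have "dim_row (quotient_mat a b c d) = 2" by (simp add: quotient_mat_def mat_of_rows_list_def)
    thus ?thesis using assms that unfolding eigenvalue_def eigenvector_def by metis
  qed
  have d: "dim_vec v = 2" using v by auto
  have nz: "v $ 0 \<noteq> 0 \<or> v $ 1 \<noteq> 0"
  proof (rule ccontr)
    assume "\<not> ?thesis"
    hence "v = 0\<^sub>v 2" using d by (intro eq_vecI) (auto simp: less_2_cases_iff)
    thus False using v by simp
  qed
  have e0: "(quotient_mat a b c d *\<^sub>v v) $ 0 = (l \<cdot>\<^sub>v v) $ 0" using v by simp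
  have e1: "(quotient_mat a b c d *\<^sub>v v) $ 1 = (l \<cdot>\<^sub>v v) $ 1" using v by simp
  have r0: "real a * v $ 0 + real b * v $ 1 = l * v $ 0"
    using e0 d by (simp add: quotient_mat_def mat_of_rows_list_def mult_mat_vec_def
        scalar_prod_def row_def numeral_2_eq_2)
  have r1: "real c * v $ 0 + real d * v $ 1 = l * v $ 1"
    using e1 d by (simp add: quotient_mat_def mat_of_rows_list_def mult_mat_vec_def
        scalar_prod_def row_def numeral_2_eq_2)
  show ?thesis using nz r0 r1 by blast
qed

theorem proposition1:
  fixes n w :: nat and C1 C2 :: "nat set set" and a b c d :: nat
  assumes "w \<ge> 2"
    and "equitable_2partition n w C1 C2 a b c d"
    and "eigenvalue (quotient_mat a b c d) (real_of_int (lambda2 n w))"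
    and "b \<ge> c"
  shows "int a = int w * (int n - int w) - int b
       \<and> int c = 2 * int n - 2 - int b
       \<and> int d = int w * (int n - int w) - 2 * int n + 2 + int b
       \<and> n - 1 \<le> b \<and> b \<le> 2 * n - 1"
proof -
  note eq = assms(2)[unfolded equitable_2partition_def]
  have split: "\<And>x. card {y \<in> johnson_vertices n w. johnson_adj w x y}
      = johnson_nbrs_in w x C1 + johnson_nbrs_in w x C2"
  proof -
    fix x
    have fin: "finite (johnson_vertices n w)"
      unfolding johnson_vertices_def by (rule finite_subset[of _ "Pow {..<n}"]) auto
    have "{y \<in> johnson_vertices n w. johnson_adj w x y}
        = {y \<in> C1. johnson_adj w x y} \<union> {y \<in> C2. johnson_adj w x y}" using eq by auto
    moreover have "finite C1" "finite C2" using fin eq by (metis finite_Un)+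
    ultimately show "?thesis x" unfolding johnson_nbrs_in_def
      using eq by (subst card_Un_disjoint[symmetric]) auto
  qed
  obtain x1 where x1: "x1 \<in> C1" using eq by auto
  obtain x2 where x2: "x2 \<in> C2" using eq by auto
  have v1: "x1 \<subseteq> {..<n}" "card x1 = w" using x1 eq by (auto simp: johnson_vertices_def)
  have v2: "x2 \<subseteq> {..<n}" "card x2 = w" using x2 eq by (auto simp: johnson_vertices_def)
  have ab: "a + b = w * (n - w)" using degree[OF v1] split[of x1] x1 eq assms(1) by auto
  have cd: "c + d = w * (n - w)" using degree[OF v2] split[of x2] x2 eq assms(1) by auto
  have wn: "w \<le> n" using v1 card_mono[of "{..<n}" x1] by auto
  obtain v0 v1 where v: "v0 \<noteq> 0 \<or> v1 \<noteq> 0"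
    "real a * v0 + real b * v1 = real_of_int (lambda2 n w) * v0"
    "real c * v0 + real d * v1 = real_of_int (lambda2 n w) * v1"
    using eig2[OF assms(3)] by blast
  define k where "k = real w * (real n - real w)"
  have rk: "real (w * (n - w)) = k" unfolding k_def using wn by (simp add: of_nat_diff)
  have "real (a + b) = k" "real (c + d) = k" using rk ab cd by simp_all
  hence ab': "real a = k - real b" "real d = k - real c" by simp_all
  have lam: "real_of_int (lambda2 n w) = k - 2 * real n + 2"
    unfolding lambda2_def k_def using wn by (simp add: algebra_simps)
  have "(k - real b - real c - real_of_int (lambda2 n w)) * (v0 - v1) = 0"
    using v(2,3) unfolding ab' by (simp add: algebra_simps)
  moreover have "v0 \<noteq> v1"
  proof
    assume "v0 = v1"
    hence "v0 \<noteq> 0" "k * v0 = real_of_int (lambda2 n w) * v0" using v unfolding ab'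
      by (auto simp: algebra_simps)
    hence "k = k - 2 * real n + 2" using lam by simp
    thus False using wn assms(1) by simp
  qed
  ultimately have "k - real b - real c - real_of_int (lambda2 n w) = 0" by simp
  hence bc: "real b + real c = 2 * real n - 2" using lam by simp
  hence bc': "int b + int c = 2 * int n - 2" by linarith
  have ab'': "int a = int w * (int n - int w) - int b" "int d = int w * (int n - int w) - int c"
  proof -
    have "real_of_int (int a) = real_of_int (int w * (int n - int w) - int b)"
         "real_of_int (int d) = real_of_int (int w * (int n - int w) - int c)"
      using ab' unfolding k_def by simp_all
    thus "int a = int w * (int n - int w) - int b" "int d = int w * (int n - int w) - int c"
      using of_int_eq_iff by blast+
  qed
  show ?thesis using bc' ab'' assms(4) by auto
qed

end
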